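(* Let $H=(V_B\cup V_U,E)$ be a 2-LO colorable 3-uniform hypergraph with $V_B\cap V_U=\emptyset$, and let $\varepsilon>0$. Let $c_U$ be a partial LO coloring of $H$ with colors from a set $C_U$ that assigns colors exactly to the vertices of $V_U$, and let $c_B$ be an LO coloring of the induced hypergraph $H_B=(V_B,E(V_B))$ with colors from a set $C_B$. Then one can obtain an LO coloring of $H$ using at most $|C_U|+|C_B|$ colors.
   Context: An LO coloring of a 3-uniform hypergraph assigns linearly ordered colors to vertices so that in every edge the maximum color occurs at exactly one vertex. A partial LO coloring colors a subset $V_1$ of vertices so that for every edge $e$, the set $e\cap V_1$ (if nonempty) has a unique vertex of maximum color. $E(V_B)$ is the set of edges $e\in E$ with $e\subseteq V_B$; vertices of $V_B$ in no such edge may receive any color. *)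

theory Defs
  imports Complex_Main
begin

definition three_uniform :: "'a set \<Rightarrow> 'a set set \<Rightarrow> bool" where
  "three_uniform V E \<longleftrightarrow> finite V \<and> (\<forall>e\<in>E. e \<subseteq> V \<and> card e = 3)"

definition unique_max :: "('a \<Rightarrow> 'c::linorder) \<Rightarrow> 'a set \<Rightarrow> bool" where
  "unique_max c S \<longleftrightarrow> (\<exists>v\<in>S. \<forall>u\<in>S. u \<noteq> v \<longrightarrow> c u < c v)"

definition lo_coloring :: "'a set \<Rightarrow> 'a set set \<Rightarrow> 'c::linorder set \<Rightarrow> ('a \<Rightarrow> 'c) \<Rightarrow> bool" where
  "lo_coloring V E C c \<longleftrightarrow> c ` V \<subseteq> C \<and> (\<forall>e\<in>E. unique_max c e)"

definition partial_lo_coloring ::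
  "'a set \<Rightarrow> 'a set set \<Rightarrow> 'a set \<Rightarrow> 'c::linorder set \<Rightarrow> ('a \<Rightarrow> 'c) \<Rightarrow> bool" where
  "partial_lo_coloring V E V1 C c \<longleftrightarrow> V1 \<subseteq> V \<and> c ` V1 \<subseteq> C \<and>
     (\<forall>e\<in>E. e \<inter> V1 \<noteq> {} \<longrightarrow> unique_max c (e \<inter> V1))"

definition induced_edges :: "'a set set \<Rightarrow> 'a set \<Rightarrow> 'a set set" where
  "induced_edges E W = {e \<in> E. e \<subseteq> W}"

definition k_lo_colorable :: "nat \<Rightarrow> 'a set \<Rightarrow> 'a set set \<Rightarrow> bool" where
  "k_lo_colorable k V E \<longleftrightarrow> (\<exists>c :: 'a \<Rightarrow> nat. lo_coloring V E {..<k} c)"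

end

theory Submission
  imports Defs
begin

definition rnk :: "'c::linorder set \<Rightarrow> 'c \<Rightarrow> nat" where
  "rnk C x = card {y\<in>C. y < x}"

lemma rnk_mono:
  assumes "finite C" "a \<in> C" "b \<in> C" "a < b"
  shows "rnk C a < rnk C b"
proof -
  have "{y\<in>C. y < a} \<subset> {y\<in>C. y < b}" using assms by auto
  then show ?thesis unfolding rnk_def using assms(1) by (intro psubset_card_mono) auto
qed

lemma rnk_bound:
  assumes "finite C" "a \<in> C"
  shows "rnk C a < card C"
proof -
  have "{y\<in>C. y < a} \<subset> C" using assms by auto
  then show ?thesis unfolding rnk_def using assms(1) by (intro psubset_card_mono) auto
qed

theorem proposition2p6:
  fixes VB VU :: "'a set" and E :: "'a set set"
    and CU :: "'c::linorder set" and CB :: "'d::linorder set"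
    and cU :: "'a \<Rightarrow> 'c" and cB :: "'a \<Rightarrow> 'd" and \<epsilon> :: real
  assumes "three_uniform (VB \<union> VU) E"
    and "k_lo_colorable 2 (VB \<union> VU) E"
    and "VB \<inter> VU = {}"
    and "\<epsilon> > 0"
    and "finite CU" and "finite CB"
    and "partial_lo_coloring (VB \<union> VU) E VU CU cU"
    and "lo_coloring VB (induced_edges E VB) CB cB"
  shows "\<exists>c :: 'a \<Rightarrow> nat. lo_coloring (VB \<union> VU) E (c ` (VB \<union> VU)) c \<and>
           card (c ` (VB \<union> VU)) \<le> card CU + card CB"
proof -
  define c where "c v = (if v \<in> VU then card CB + rnk CU (cU v) else rnk CB (cB v))" for v
  have pU: "cU ` VU \<subseteq> CU" "\<And>e. e \<in> E \<Longrightarrow> e \<inter> VU \<noteq> {} \<Longrightarrow> unique_max cU (e \<inter> VU)"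
    using assms(7) unfolding partial_lo_coloring_def by auto
  have pB: "cB ` VB \<subseteq> CB" "\<And>e. e \<in> E \<Longrightarrow> e \<subseteq> VB \<Longrightarrow> unique_max cB e"
    using assms(8) unfolding lo_coloring_def induced_edges_def by auto
  have EV: "\<And>e. e \<in> E \<Longrightarrow> e \<subseteq> VB \<union> VU" using assms(1) unfolding three_uniform_def by auto
  have img: "c ` (VB \<union> VU) \<subseteq> {..<card CU + card CB}"
  proof
    fix x assume "x \<in> c ` (VB \<union> VU)"
    then obtain v where v: "v \<in> VB \<union> VU" "x = c v" by auto
    show "x \<in> {..<card CU + card CB}"
    proof (cases "v \<in> VU")
      case True
      then have "rnk CU (cU v) < card CU" using pU(1) assms(5) by (intro rnk_bound) auto
      then show ?thesis using v True unfolding c_def by auto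
    next
      case False
      then have "v \<in> VB" using v by auto
      then have "rnk CB (cB v) < card CB" using pB(1) assms(6) by (intro rnk_bound) auto
      then show ?thesis using v False unfolding c_def by auto
    qed
  qed
  have um: "unique_max c e" if e: "e \<in> E" for e
  proof (cases "e \<inter> VU = {}")
    case True
    then have sub: "e \<subseteq> VB" using EV[OF e] by auto
    then obtain v where v: "v \<in> e" "\<forall>u\<in>e. u \<noteq> v \<longrightarrow> cB u < cB v"
      using pB(2)[OF e] unfolding unique_max_def by auto
    have "\<forall>u\<in>e. u \<noteq> v \<longrightarrow> c u < c v"
    proof (intro ballI impI)
      fix u assume "u \<in> e" "u \<noteq> v"
      then have "rnk CB (cB u) < rnk CB (cB v)" using v sub pB(1) assms(6)
        by (intro rnk_mono) auto
      then show "c u < c v" using True \<open>u \<in> e\<close> v unfolding c_def by auto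
    qed
    then show ?thesis using v unfolding unique_max_def by auto
  next
    case False
    then obtain v where v: "v \<in> e \<inter> VU" "\<forall>u\<in>e \<inter> VU. u \<noteq> v \<longrightarrow> cU u < cU v"
      using pU(2)[OF e] unfolding unique_max_def by auto
    have "\<forall>u\<in>e. u \<noteq> v \<longrightarrow> c u < c v"
    proof (intro ballI impI)
      fix u assume u: "u \<in> e" "u \<noteq> v"
      show "c u < c v"
      proof (cases "u \<in> VU")
        case True
        then have "rnk CU (cU u) < rnk CU (cU v)" using v u pU(1) assms(5)
          by (intro rnk_mono) auto
        then show ?thesis using True v unfolding c_def by auto
      next
        case F: False
        then have "u \<in> VB" using EV[OF e] u by auto
        then have "rnk CB (cB u) < card CB" using pB(1) assms(6) by (intro rnk_bound) auto
        then show ?thesis using F v unfolding c_def by auto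
      qed
    qed
    then show ?thesis using v unfolding unique_max_def by auto
  qed
  have "card (c ` (VB \<union> VU)) \<le> card CU + card CB"
    using card_mono[OF _ img] by auto
  then show ?thesis using um unfolding lo_coloring_def by auto
qed

end
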